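(* Let $a,b,c>0$ and let $F(x)=F(a,b;c;x)$ for $|x|<1$. If $a+b\ge c\ge 2ab$ and $c>a+b-1/2$, then $1/F(x)$ is concave on $(0,1)$. In particular, $$F\Big(\frac{x+y}{2}\Big)\le\frac{2F(x)F(y)}{F(x)+F(y)}$$ for all $x,y\in(0,1)$, with equality if and only if $x=y$.
   Context: $F(a,b;c;x)={}_2F_1(a,b;c;x)=\sum_{n=0}^\infty\frac{(a,n)(b,n)}{(c,n)\,n!}x^n$ for $|x|<1$ is the Gaussian hypergeometric function, where $(a,0)=1$ and $(a,n)=a(a+1)\cdots(a+n-1)$ for $n\ge1$. *)

theory Defs
  imports "HOL-Analysis.Analysis"
begin

text \<open>Gaussian hypergeometric function F(a,b;c;x), via its power series
  (meaningful for |x| < 1; pochhammer a n = (a,n)).\<close>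
definition hyp2F1 :: "real \<Rightarrow> real \<Rightarrow> real \<Rightarrow> real \<Rightarrow> real" where
  "hyp2F1 a b c x =
     (\<Sum>n. pochhammer a n * pochhammer b n / (pochhammer c n * fact n) * x ^ n)"

end

theory Submission
  imports Defs
begin

lemma frac_leI:
  fixes x y w z :: real
  assumes "y > 0" "z > 0" "x * z \<le> w * y"
  shows "x / y \<le> w / z"
  using assms by (simp add: frac_le_eq divide_nonpos_pos)

locale hg =
  fixes a b c :: real
  assumes a_pos: "a > 0" and b_pos: "b > 0" and c_pos: "c > 0"
    and h1: "a + b \<ge> c" and h2: "c \<ge> 2 * a * b" and h3: "c > a + b - 1/2"
begin

definition A :: "nat \<Rightarrow> real" where
  "A n = pochhammer a n * pochhammer b n / (pochhammer c n * fact n)"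

definition r :: "nat \<Rightarrow> real" where
  "r n = (a + n) * (b + n) / ((c + n) * (n + 1))"

lemma A_0: "A 0 = 1" by (simp add: A_def)

lemma A_Suc: "A (Suc n) = A n * r n"
proof -
  have "pochhammer c n > 0" using c_pos by (simp add: pochhammer_pos)
  moreover have "c + n > 0" using c_pos by simp
  moreover have "(fact n :: real) > 0" by simp
  ultimately show ?thesis
    by (simp add: A_def r_def pochhammer_Suc field_simps)
qed

lemma A_pos: "A n > 0"
  using a_pos b_pos c_pos by (simp add: A_def pochhammer_pos)

lemma r_pos: "r n > 0"
  using a_pos b_pos c_pos by (simp add: r_def)

lemma r_le1: "r n \<le> 1"
proof -
  have "(a + n) * (b + n) \<le> (c + n) * (n + 1)"
  proof -
    have "(c + n) * (n + 1) - (a + n) * (b + n) = (c - a*b) + (c + 1 - a - b) * n"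
      by (simp add: algebra_simps)
    also have "\<dots> \<ge> 0"
    proof -
      have "a * b > 0" using a_pos b_pos by simp
      then show ?thesis using h2 h3 by (intro add_nonneg_nonneg mult_nonneg_nonneg) auto
    qed
    finally show ?thesis by simp
  qed
  then show ?thesis using c_pos by (simp add: r_def divide_le_eq)
qed

lemma A_le1: "A n \<le> 1"
proof (induction n)
  case 0 then show ?case by (simp add: A_0)
next
  case (Suc n)
  have "A n * r n \<le> 1 * 1"
    using Suc r_le1[of n] A_pos[of n] r_pos[of n] by (intro mult_mono) auto
  then show ?case by (simp add: A_Suc)
qed

lemma r_mono_Suc: "r n \<le> r (Suc n)"
proof -
  define k :: real where "k = real n"
  have k0: "k \<ge> 0" by (simp add: k_def)
  define s where "s = a + b"
  define p where "p = a * b"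
  have pp: "p > 0" using a_pos b_pos p_def by simp
  have "((a+(k+1))*(b+(k+1))) * ((c+k)*(k+1)) - ((a+k)*(b+k)) * ((c+(k+1))*((k+1)+1))
        = (c+1-s)*(k*k) + ((c - 2*p) + c + (c + 1 - s))*k + ((c - 2*p) + c*(s-p))"
    unfolding s_def p_def by algebra
  also have "\<dots> \<ge> 0"
  proof -
    have "c + 1 - s \<ge> 0" using h3 s_def by simp
    moreover have "c - 2*p \<ge> 0" using h2 p_def by simp
    moreover have "s - p \<ge> 0" using h1 h2 pp s_def p_def by linarith
    ultimately show ?thesis using k0 c_pos
      by (intro add_nonneg_nonneg mult_nonneg_nonneg) auto
  qed
  finally have key: "((a+k)*(b+k)) * ((c+(k+1))*((k+1)+1)) \<le> ((a+(k+1))*(b+(k+1))) * ((c+k)*(k+1))"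
    by simp
  have e1: "r n = (a+k)*(b+k)/((c+k)*(k+1))" by (simp add: r_def k_def)
  have e2: "r (Suc n) = (a+(k+1))*(b+(k+1))/((c+(k+1))*((k+1)+1))"
  proof -
    have s1: "real (Suc n) = k + 1" by (simp add: k_def)
    have s2: "real (Suc n + 1) = k + 1 + 1" by (simp add: k_def)
    show ?thesis unfolding r_def s1 s2 by (rule refl)
  qed
  have "(c+k)*(k+1) > 0" "(c+(k+1))*((k+1)+1) > 0" using k0 c_pos by auto
  then show ?thesis unfolding e1 e2 using key by (rule frac_leI)
qed

lemma r_mono: "i \<le> k \<Longrightarrow> r i \<le> r k"
  by (rule lift_Suc_mono_le[of r, OF r_mono_Suc])

lemma A_logconv: "i \<le> k \<Longrightarrow> A (Suc i) * A k \<le> A i * A (Suc k)"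
proof -
  assume "i \<le> k"
  then have "r i \<le> r k" by (rule r_mono)
  then have "A i * A k * r i \<le> A i * A k * r k"
    using A_pos[of i] A_pos[of k] by (intro mult_left_mono) auto
  then show ?thesis by (simp add: A_Suc ac_simps)
qed

definition p :: "nat \<Rightarrow> nat \<Rightarrow> real" where "p N i = A i * A (N - i)"

lemma p_sym: "i \<le> N \<Longrightarrow> p N (N - i) = p N i"
  by (simp add: p_def mult.commute)

lemma p_mono: "2 * (l + d) \<le> N \<Longrightarrow> p N (l + d) \<le> p N l"
proof (induction d)
  case 0 then show ?case by simp
next
  case (Suc d)
  have "A (Suc (l+d)) * A (N - l - d - 1) \<le> A (l+d) * A (Suc (N - l - d - 1))"
    using Suc.prems by (intro A_logconv) auto
  moreover have "Suc (N - l - d - 1) = N - (l + d)" using Suc.prems by auto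
  moreover have "N - (l + Suc d) = N - l - d - 1" by simp
  ultimately have "p N (l + Suc d) \<le> p N (l + d)" by (simp add: p_def)
  also have "\<dots> \<le> p N l" using Suc by auto
  finally show ?case .
qed

lemma u_min:
  assumes "i \<le> N"
  shows "real i * (real N - real i) = real (min i (N - i)) * (real N - real (min i (N - i)))"
proof (cases "i \<le> N - i")
  case True then show ?thesis by (simp add: min_def)
next
  case False
  then have "min i (N - i) = N - i" by simp
  moreover have "real (N - i) = real N - real i" using assms by (simp add: of_nat_diff)
  ultimately show ?thesis by (simp add: algebra_simps)
qed

lemma p_min: "i \<le> N \<Longrightarrow> p N i = p N (min i (N - i))"
  using p_sym[of i N] by (auto simp: min_def)

lemma p_key:
  assumes "i \<le> N" "j \<le> N" "real i * (real N - real i) \<ge> real j * (real N - real j)"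
  shows "p N i \<le> p N j"
proof -
  define i' where "i' = min i (N - i)"
  define j' where "j' = min j (N - j)"
  have pi: "p N i = p N i'" unfolding i'_def by (rule p_min[OF assms(1)])
  have pj: "p N j = p N j'" unfolding j'_def by (rule p_min[OF assms(2)])
  have ui: "real i * (real N - real i) = real i' * (real N - real i')"
    unfolding i'_def by (rule u_min[OF assms(1)])
  have uj: "real j * (real N - real j) = real j' * (real N - real j')"
    unfolding j'_def by (rule u_min[OF assms(2)])
  have i2: "2 * i' \<le> N" "2 * j' \<le> N" by (auto simp: i'_def j'_def min_def)
  have "j' \<le> i'"
  proof (rule ccontr)
    assume "\<not> j' \<le> i'"
    then have lt: "i' < j'" by simp
    have "real j' * (real N - real j') - real i' * (real N - real i')
        = (real j' - real i') * (real N - real i' - real j')" by algebra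
    also have "\<dots> > 0"
    proof -
      have "real i' < real j'" using lt by simp
      moreover have "real i' + real j' < real N"
      proof -
        have "i' + j' < N" using lt i2 by linarith
        then show ?thesis by (metis of_nat_add of_nat_less_iff)
      qed
      ultimately show ?thesis by (intro mult_pos_pos) auto
    qed
    finally show False using assms(3) ui uj by linarith
  qed
  then obtain d where "i' = j' + d" using le_Suc_ex by blast
  then have "p N i' \<le> p N j'" using p_mono[of j' d N] i2 by auto
  then show ?thesis using pi pj by simp
qed

definition w :: "nat \<Rightarrow> nat \<Rightarrow> real" where
  "w N i = real N * (real N - 1) - 6 * (real i * (real N - real i))"

lemma pair_nonneg:
  assumes "i \<le> N" "j \<le> N"
  shows "(w N i - w N j) * (p N i - p N j) \<ge> 0"
proof (cases "real i * (real N - real i) \<ge> real j * (real N - real j)")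
  case True
  then have "p N i \<le> p N j" using assms p_key by blast
  moreover have "w N i \<le> w N j" using True by (simp add: w_def)
  ultimately show ?thesis by (intro mult_nonpos_nonpos) auto
next
  case False
  then have "p N j \<le> p N i" using assms p_key[of j N i] by linarith
  moreover have "w N j \<le> w N i" using False by (simp add: w_def)
  ultimately show ?thesis by (intro mult_nonneg_nonneg) auto
qed

end

lemma sum_id_real: "(\<Sum>i\<le>N. real i) = real N * (real N + 1) / 2"
  by (induction N) (auto simp: field_simps)

lemma sum_u: "(\<Sum>i\<le>N. real i * (real N - real i)) = (real N - 1) * real N * (real N + 1) / 6"
proof (induction N)
  case 0 then show ?case by simp
next
  case (Suc N)
  have "(\<Sum>i\<le>Suc N. real i * (real (Suc N) - real i))
      = (\<Sum>i\<le>N. real i * (real (Suc N) - real i))" by simp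
  also have "\<dots> = (\<Sum>i\<le>N. real i * (real N - real i) + real i)"
    by (intro sum.cong) (auto simp: algebra_simps)
  also have "\<dots> = (real N - 1) * real N * (real N + 1) / 6 + real N * (real N + 1) / 2"
    by (simp add: sum.distrib Suc sum_id_real)
  also have "\<dots> = (real (Suc N) - 1) * real (Suc N) * (real (Suc N) + 1) / 6"
    by (simp add: field_simps)
  finally show ?case .
qed

context hg begin

lemma sum_w: "(\<Sum>i\<le>N. w N i) = 0"
proof -
  have "(\<Sum>i\<le>N. w N i) = (\<Sum>i\<le>N. real N * (real N - 1)) - 6 * (\<Sum>i\<le>N. real i * (real N - real i))"
    by (simp add: w_def sum_subtractf sum_distrib_left)
  also have "\<dots> = 0" unfolding sum_u by (simp add: field_simps)
  finally show ?thesis .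
qed

lemma cheb: "(\<Sum>i\<le>N. w N i * p N i) \<ge> 0"
proof -
  define S where "S = (\<Sum>i\<le>N. w N i * p N i)"
  define P where "P = (\<Sum>i\<le>N. p N i)"
  have z1: "\<And>i. (\<Sum>j\<le>N. w N j * p N i) = 0"
    by (simp add: sum_distrib_right[symmetric] sum_w)
  have z: "(\<Sum>i\<le>N. \<Sum>j\<le>N. w N j * p N i) = 0"
    by (simp only: z1 sum.neutral_const)
  have "0 \<le> (\<Sum>i\<le>N. \<Sum>j\<le>N. (w N i - w N j) * (p N i - p N j))"
    by (intro sum_nonneg pair_nonneg) auto
  also have "\<dots> = (\<Sum>i\<le>N. \<Sum>j\<le>N. (w N i * p N i + w N j * p N j) - (w N i * p N j + w N j * p N i))"
    by (intro sum.cong refl) (simp add: algebra_simps)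
  also have "\<dots> = (\<Sum>i\<le>N. real (Suc N) * (w N i * p N i) + S - w N i * P)"
  proof (intro sum.cong refl)
    fix i
    have e1: "(\<Sum>j\<le>N. w N i * p N j) = w N i * P" by (simp add: P_def sum_distrib_left)
    have e3: "(\<Sum>j\<le>N. w N i * p N i) = real (Suc N) * (w N i * p N i)" by simp
    show "(\<Sum>j\<le>N. (w N i * p N i + w N j * p N j) - (w N i * p N j + w N j * p N i))
        = real (Suc N) * (w N i * p N i) + S - w N i * P"
      by (simp only: sum_subtractf sum.distrib e1 z1 e3 S_def[symmetric])
  qed
  also have "\<dots> = 2 * real (Suc N) * S"
  proof -
    have e1: "(\<Sum>i\<le>N. w N i * P) = 0" by (simp add: sum_distrib_right[symmetric] sum_w)
    have e2: "(\<Sum>i\<le>N. real (Suc N) * (w N i * p N i)) = real (Suc N) * S"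
      by (simp add: S_def sum_distrib_left)
    have e3: "(\<Sum>i\<le>N. S) = real (Suc N) * S" by simp
    show ?thesis by (simp only: sum_subtractf sum.distrib e1 e2 e3)
  qed
  finally show ?thesis unfolding S_def by (simp add: zero_le_mult_iff)
qed

definition v :: "nat \<Rightarrow> nat \<Rightarrow> real" where
  "v N i = (real N - real i) * (real N - real i - 1) - 2 * (real i * (real N - real i))"

lemma vw: "i \<le> N \<Longrightarrow> v N i + v N (N - i) = w N i"
proof -
  assume "i \<le> N"
  then have e: "real (N - i) = real N - real i" by (simp add: of_nat_diff)
  show ?thesis unfolding v_def w_def e by algebra
qed

lemma E_nonneg: "(\<Sum>i\<le>N. p N i * v N i) \<ge> 0"
proof -
  have rfl: "(\<Sum>i\<le>N. p N i * v N i) = (\<Sum>i\<le>N. p N i * v N (N - i))"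
  proof -
    have "(\<Sum>i\<le>N. p N i * v N i) = (\<Sum>i\<le>N. p N (N - i) * v N (N - i))"
      by (rule sum.reindex_bij_witness[where i="\<lambda>i. N - i" and j="\<lambda>i. N - i"]) auto
    also have "\<dots> = (\<Sum>i\<le>N. p N i * v N (N - i))"
      by (intro sum.cong refl) (simp add: p_sym)
    finally show ?thesis .
  qed
  have "2 * (\<Sum>i\<le>N. p N i * v N i) = (\<Sum>i\<le>N. p N i * v N i) + (\<Sum>i\<le>N. p N i * v N (N - i))"
    using rfl by simp
  also have "\<dots> = (\<Sum>i\<le>N. w N i * p N i)"
    unfolding sum.distrib[symmetric]
  proof (rule sum.cong[OF refl])
    fix x assume "x \<in> {..N}"
    then have "v N x + v N (N - x) = w N x" by (intro vw) simp
    then show "p N x * v N x + p N x * v N (N - x) = w N x * p N x"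
      by (metis distrib_left mult.commute)
  qed
  also have "\<dots> \<ge> 0" by (rule cheb)
  finally show ?thesis by simp
qed


definition F :: "real \<Rightarrow> real" where "F x = (\<Sum>n. A n * x ^ n)"
definition F1 :: "real \<Rightarrow> real" where "F1 x = (\<Sum>n. diffs A n * x ^ n)"
definition F2 :: "real \<Rightarrow> real" where "F2 x = (\<Sum>n. diffs (diffs A) n * x ^ n)"

lemma summ0: "\<bar>x\<bar> < 1 \<Longrightarrow> summable (\<lambda>n. A n * x ^ n)"
proof -
  assume x: "\<bar>x\<bar> < 1"
  show ?thesis
  proof (rule summable_comparison_test'[where g="\<lambda>n. \<bar>x\<bar> ^ n" and N=0])
    show "summable (\<lambda>n. \<bar>x\<bar> ^ n)" using x by (intro summable_geometric) simp
    fix n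
    have "norm (A n * x ^ n) = A n * \<bar>x\<bar> ^ n" using A_pos[of n] by (simp add: abs_mult power_abs)
    also have "\<dots> \<le> 1 * \<bar>x\<bar> ^ n" using A_le1[of n] by (intro mult_right_mono) auto
    finally show "norm (A n * x ^ n) \<le> \<bar>x\<bar> ^ n" by simp
  qed
qed

lemma summ1: "\<bar>x\<bar> < 1 \<Longrightarrow> summable (\<lambda>n. diffs A n * x ^ n)"
  by (rule termdiff_converges[where K=1]) (auto intro: summ0)

lemma summ2: "\<bar>x\<bar> < 1 \<Longrightarrow> summable (\<lambda>n. diffs (diffs A) n * x ^ n)"
  by (rule termdiff_converges[where K=1]) (auto intro: summ1)

lemma derF: "\<bar>x\<bar> < 1 \<Longrightarrow> DERIV F x :> F1 x"
  unfolding F_def[abs_def] F1_def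
  by (rule termdiffs_strong'[where K=1]) (auto intro: summ0)

lemma derF1: "\<bar>x\<bar> < 1 \<Longrightarrow> DERIV F1 x :> F2 x"
  unfolding F1_def[abs_def] F2_def
  by (rule termdiffs_strong'[where K=1]) (auto intro: summ1)

lemma dA: "diffs A n = real (Suc n) * A (Suc n)"
  by (simp add: diffs_def)

lemma ddA: "diffs (diffs A) n = real (Suc n) * (real (Suc (Suc n)) * A (Suc (Suc n)))"
  by (simp add: diffs_def)

lemma dA_nn: "diffs A n \<ge> 0"
  using A_pos[of "Suc n"] by (simp add: dA)
lemma ddA_nn: "diffs (diffs A) n \<ge> 0"
  using A_pos[of "Suc (Suc n)"] by (simp add: ddA)

lemma F_ge1: "0 \<le> x \<Longrightarrow> x < 1 \<Longrightarrow> F x \<ge> 1"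
proof -
  assume x: "0 \<le> x" "x < 1"
  have "sum (\<lambda>n. A n * x ^ n) {0} \<le> (\<Sum>n. A n * x ^ n)"
  proof (intro sum_le_suminf summ0)
    fix n show "0 \<le> A n * x ^ n" using x A_pos[of n] by simp
  qed (use x in auto)
  then show ?thesis by (simp add: F_def A_0)
qed

lemma norm_summ: "summable f \<Longrightarrow> (\<And>n. f n \<ge> (0::real)) \<Longrightarrow> summable (\<lambda>n. norm (f n))"
proof -
  assume "summable f" "\<And>n. f n \<ge> 0"
  moreover have "(\<lambda>n. norm (f n)) = f" using \<open>\<And>n. f n \<ge> 0\<close> by (intro ext) simp
  ultimately show ?thesis by simp
qed

lemma cauchy_pow:
  fixes u v :: "nat \<Rightarrow> real"
  assumes "summable (\<lambda>n. u n * x ^ n)" "summable (\<lambda>n. v n * x ^ n)"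
    and "\<And>n. u n \<ge> 0" "\<And>n. v n \<ge> 0" "x \<ge> 0"
  shows "(\<lambda>k. (\<Sum>i\<le>k. u i * v (k - i)) * x ^ k) sums ((\<Sum>n. u n * x ^ n) * (\<Sum>n. v n * x ^ n))"
proof -
  have "(\<lambda>k. \<Sum>i\<le>k. (u i * x ^ i) * (v (k - i) * x ^ (k - i))) sums ((\<Sum>n. u n * x ^ n) * (\<Sum>n. v n * x ^ n))"
    using assms by (intro Cauchy_product_sums norm_summ) auto
  moreover have "(\<Sum>i\<le>k. (u i * x ^ i) * (v (k - i) * x ^ (k - i))) = (\<Sum>i\<le>k. u i * v (k - i)) * x ^ k" for k
  proof -
    have "(\<Sum>i\<le>k. (u i * x ^ i) * (v (k - i) * x ^ (k - i))) = (\<Sum>i\<le>k. u i * v (k - i) * x ^ k)"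
    proof (rule sum.cong[OF refl])
      fix i assume "i \<in> {..k}"
      then have "x ^ i * x ^ (k - i) = x ^ k" by (simp add: power_add[symmetric])
      then show "(u i * x ^ i) * (v (k - i) * x ^ (k - i)) = u i * v (k - i) * x ^ k"
        by (metis mult.assoc mult.left_commute)
    qed
    then show ?thesis by (simp add: sum_distrib_right)
  qed
  ultimately show ?thesis by simp
qed

definition c1 :: "nat \<Rightarrow> real" where "c1 k = (\<Sum>i\<le>k. A i * diffs (diffs A) (k - i))"
definition c2 :: "nat \<Rightarrow> real" where "c2 k = (\<Sum>i\<le>k. diffs A i * diffs A (k - i))"

lemma D_sums:
  assumes "0 \<le> x" "x < 1"
  shows "(\<lambda>k. (c1 k - 2 * c2 k) * x ^ k) sums (F x * F2 x - 2 * (F1 x * F1 x))"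
proof -
  have ax: "\<bar>x\<bar> < 1" using assms by simp
  have s1: "(\<lambda>k. c1 k * x ^ k) sums (F x * F2 x)"
    unfolding c1_def F_def F2_def
    using assms A_pos ddA_nn by (intro cauchy_pow summ0 summ2 ax) (auto intro: less_imp_le)
  have s2: "(\<lambda>k. c2 k * x ^ k) sums (F1 x * F1 x)"
    unfolding c2_def F1_def
    using assms dA_nn by (intro cauchy_pow summ1 ax) auto
  have "(\<lambda>k. c1 k * x ^ k - 2 * (c2 k * x ^ k)) sums (F x * F2 x - 2 * (F1 x * F1 x))"
    by (intro sums_diff s1 sums_mult s2)
  then show ?thesis by (simp add: algebra_simps)
qed


definition q1 :: "nat \<Rightarrow> nat \<Rightarrow> real" where
  "q1 N i = p N i * ((real N - real i) * (real N - real i - 1))"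
definition q2 :: "nat \<Rightarrow> nat \<Rightarrow> real" where
  "q2 N i = p N i * (real i * (real N - real i))"

lemma c1_eq: "c1 k = (\<Sum>i\<le>Suc (Suc k). q1 (Suc (Suc k)) i)"
proof -
  have "(\<Sum>i\<le>Suc (Suc k). q1 (Suc (Suc k)) i) = (\<Sum>i\<le>k. q1 (Suc (Suc k)) i)"
    by (simp add: q1_def)
  also have "\<dots> = c1 k" unfolding c1_def
  proof (rule sum.cong[OF refl])
    fix i assume "i \<in> {..k}" then have i: "i \<le> k" by simp
    have e1: "Suc (Suc k) - i = Suc (Suc (k - i))" using i by simp
    have e2: "real (Suc (k - i)) = real (Suc (Suc k)) - real i - 1" using i by (simp add: of_nat_diff)
    have e3: "real (Suc (Suc (k - i))) = real (Suc (Suc k)) - real i" using i by (simp add: of_nat_diff)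
    show "q1 (Suc (Suc k)) i = A i * diffs (diffs A) (k - i)"
      unfolding q1_def p_def ddA e1 e2 e3 by algebra
  qed
  finally show ?thesis by simp
qed

lemma c2_eq: "c2 k = (\<Sum>i\<le>Suc (Suc k). q2 (Suc (Suc k)) i)"
proof -
  have "(\<Sum>i\<le>Suc (Suc k). q2 (Suc (Suc k)) i) = q2 (Suc (Suc k)) 0 + (\<Sum>i\<le>Suc k. q2 (Suc (Suc k)) (Suc i))"
    by (rule sum.atMost_Suc_shift)
  also have "\<dots> = (\<Sum>i\<le>k. q2 (Suc (Suc k)) (Suc i))"
    by (simp add: q2_def)
  also have "\<dots> = c2 k" unfolding c2_def
  proof (rule sum.cong[OF refl])
    fix i assume "i \<in> {..k}" then have i: "i \<le> k" by simp
    have e1: "Suc (Suc k) - Suc i = Suc (k - i)" using i by simp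
    have e2: "real (Suc (k - i)) = real (Suc (Suc k)) - real (Suc i)" using i by (simp add: of_nat_diff)
    show "q2 (Suc (Suc k)) (Suc i) = diffs A i * diffs A (k - i)"
      unfolding q2_def p_def dA e1 e2 by algebra
  qed
  finally show ?thesis by simp
qed

lemma coef_nonneg: "c1 k - 2 * c2 k \<ge> 0"
proof -
  have "c1 k - 2 * c2 k = (\<Sum>i\<le>Suc (Suc k). p (Suc (Suc k)) i * v (Suc (Suc k)) i)"
    unfolding c1_eq c2_eq sum_distrib_left sum_subtractf[symmetric]
    by (intro sum.cong refl) (simp add: q1_def q2_def v_def algebra_simps)
  also have "\<dots> \<ge> 0" by (rule E_nonneg)
  finally show ?thesis .
qed

lemma frac_lessI:
  fixes x y w z :: real
  assumes "y > 0" "z > 0" "x * z < w * y"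
  shows "x / y < w / z"
  using assms by (simp add: frac_less_eq divide_neg_pos)

lemma r01: "r 0 < r 1"
proof -
  have e0: "r 0 = (a*b)/(c*1)" by (simp add: r_def)
  have e1: "r 1 = ((a+1)*(b+1))/((c+1)*2)" by (simp add: r_def)
  have "((a+1)*(b+1))*(c*1) - (a*b)*((c+1)*2) = (c - 2*(a*b)) + c*((a+b) - a*b)" by algebra
  moreover have "c - 2*(a*b) \<ge> 0" using h2 by simp
  moreover have "c*((a+b) - a*b) > 0"
  proof -
    have "a * b > 0" using a_pos b_pos by simp
    then have "(a+b) - a*b > 0" using h1 h2 by linarith
    then show ?thesis using c_pos by simp
  qed
  ultimately have "(a*b)*((c+1)*2) < ((a+1)*(b+1))*(c*1)" by linarith
  moreover have "c * 1 > 0" "(c+1)*2 > 0" using c_pos by auto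
  ultimately show ?thesis unfolding e0 e1 by (intro frac_lessI) auto
qed

lemma coef0_pos: "c1 0 - 2 * c2 0 > 0"
proof -
  have A1: "A 1 = r 0" using A_Suc[of 0] by (simp add: A_0)
  have A1': "A (Suc 0) = r 0" using A_Suc[of 0] by (simp add: A_0)
  have A2: "A 2 = r 0 * r 1" using A_Suc[of 1] A1 by (simp add: numeral_2_eq_2)
  have "c1 0 - 2 * c2 0 = 2 * (r 0 * (r 1 - r 0))"
    by (simp add: c1_def c2_def ddA dA A_0 A1 A1' A2[unfolded numeral_2_eq_2] algebra_simps)
  also have "\<dots> > 0" using r_pos[of 0] r01 by simp
  finally show ?thesis .
qed

lemma D_pos:
  assumes "0 \<le> x" "x < 1"
  shows "F x * F2 x - 2 * (F1 x * F1 x) > 0"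
proof -
  have s: "(\<lambda>k. (c1 k - 2 * c2 k) * x ^ k) sums (F x * F2 x - 2 * (F1 x * F1 x))"
    using assms by (rule D_sums)
  have "sum (\<lambda>k. (c1 k - 2 * c2 k) * x ^ k) {0} \<le> (\<Sum>k. (c1 k - 2 * c2 k) * x ^ k)"
  proof (intro sum_le_suminf)
    show "summable (\<lambda>k. (c1 k - 2 * c2 k) * x ^ k)" using s by (rule sums_summable)
    fix n show "0 \<le> (c1 n - 2 * c2 n) * x ^ n" using assms coef_nonneg[of n] by simp
  qed auto
  then have "c1 0 - 2 * c2 0 \<le> F x * F2 x - 2 * (F1 x * F1 x)"
    using sums_unique[OF s] by simp
  then show ?thesis using coef0_pos by linarith
qed


definition g1 :: "real \<Rightarrow> real" where "g1 x = - F1 x / (F x * F x)"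
definition g2 :: "real \<Rightarrow> real" where
  "g2 x = ((- F2 x) * (F x * F x) - (- F1 x) * (F1 x * F x + F1 x * F x)) / ((F x * F x) * (F x * F x))"

lemma derG:
  assumes "0 < x" "x < 1"
  shows "DERIV (\<lambda>x. 1 / F x) x :> g1 x"
proof -
  have ax: "\<bar>x\<bar> < 1" using assms by simp
  have Fx: "F x \<ge> 1" using assms F_ge1 by simp
  have "DERIV (\<lambda>x. 1 / F x) x :> (0 * F x - 1 * F1 x) / (F x * F x)"
    using Fx by (intro DERIV_divide DERIV_const derF ax) auto
  then show ?thesis by (rule DERIV_cong) (simp add: g1_def)
qed

lemma derg1:
  assumes "0 < x" "x < 1"
  shows "DERIV g1 x :> g2 x"
proof -
  have ax: "\<bar>x\<bar> < 1" using assms by simp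
  have Fx: "F x \<ge> 1" using assms F_ge1 by simp
  have "DERIV (\<lambda>x. - F1 x / (F x * F x)) x :> g2 x"
    unfolding g2_def using Fx
    by (intro DERIV_divide DERIV_minus DERIV_mult derF derF1 ax) auto
  then show ?thesis by (simp add: g1_def[abs_def])
qed

lemma g2_neg:
  assumes "0 < x" "x < 1"
  shows "g2 x < 0"
proof -
  have Fx: "F x \<ge> 1" using assms F_ge1 by simp
  have D: "F x * F2 x - 2 * (F1 x * F1 x) > 0" using assms D_pos by simp
  have "(- F2 x) * (F x * F x) - (- F1 x) * (F1 x * F x + F1 x * F x)
      = - (F x * (F x * F2 x - 2 * (F1 x * F1 x)))" by algebra
  also have "\<dots> < 0" using Fx D by simp
  finally have "(- F2 x) * (F x * F x) - (- F1 x) * (F1 x * F x + F1 x * F x) < 0" .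
  moreover have "(F x * F x) * (F x * F x) > 0" using Fx by simp
  ultimately show ?thesis unfolding g2_def by (rule divide_neg_pos)
qed

lemma concG: "concave_on {0<..<1} (\<lambda>x. 1 / F x)"
  by (rule f''_le0_imp_concave[where f'=g1 and f''=g2])
     (auto intro: derG derg1 less_imp_le g2_neg)

lemma mid_strict:
  assumes "0 < x" "x < y" "y < 1"
  shows "1 / F x + 1 / F y < 2 * (1 / F ((x + y) / 2))"
proof -
  define m where "m = (x + y) / 2"
  define G where "G = (\<lambda>x. 1 / F x)"
  have m: "x < m" "m < y" using assms by (auto simp: m_def)
  obtain z1 where z1: "x < z1" "z1 < m" "G m - G x = (m - x) * g1 z1"
    using MVT2[of x m G g1] m assms derG unfolding G_def by force
  obtain z2 where z2: "m < z2" "z2 < y" "G y - G m = (y - m) * g1 z2"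
    using MVT2[of m y G g1] m assms derG unfolding G_def by force
  have "z1 < z2" using z1 z2 by simp
  then obtain z3 where z3: "z1 < z3" "z3 < z2" "g1 z2 - g1 z1 = (z2 - z1) * g2 z3"
    using MVT2[of z1 z2 g1 g2] z1 z2 m assms derg1 by force
  have "g2 z3 < 0" using z3 z1 z2 m assms by (intro g2_neg) auto
  then have "(z2 - z1) * g2 z3 < 0" using \<open>z1 < z2\<close> by (simp add: mult_pos_neg)
  then have "g1 z2 < g1 z1" using z3 by simp
  moreover have "m - x > 0" using m by simp
  moreover have "y - m = m - x" unfolding m_def by (simp add: field_simps)
  ultimately have "G y - G m < G m - G x" using z1 z2 by simp
  then show ?thesis unfolding G_def m_def by simp
qed

end

lemma harm_alg:
  fixes X Y M :: real
  assumes "X > 0" "Y > 0" "M > 0" "1 / X + 1 / Y < 2 * (1 / M)"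
  shows "M < 2 * X * Y / (X + Y)"
  using assms by (simp add: field_simps)

theorem theorem1p4:
  fixes a b c :: real
  assumes "a > 0" and "b > 0" and "c > 0"
    and "a + b \<ge> c" and "c \<ge> 2 * a * b" and "c > a + b - 1/2"
  shows "concave_on {0<..<1} (\<lambda>x. 1 / hyp2F1 a b c x)
    \<and> (\<forall>x\<in>{0<..<1::real}. \<forall>y\<in>{0<..<1::real}.
         hyp2F1 a b c ((x + y) / 2)
           \<le> 2 * hyp2F1 a b c x * hyp2F1 a b c y / (hyp2F1 a b c x + hyp2F1 a b c y)
       \<and> (hyp2F1 a b c ((x + y) / 2)
           = 2 * hyp2F1 a b c x * hyp2F1 a b c y / (hyp2F1 a b c x + hyp2F1 a b c y)
          \<longleftrightarrow> x = y))"
proof -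
  interpret hg a b c using assms by unfold_locales
  have H: "hyp2F1 a b c = F" by (intro ext) (simp add: hyp2F1_def F_def A_def)
  have strict: "F ((x + y) / 2) < 2 * F x * F y / (F x + F y)"
    if "x \<in> {0<..<1}" "y \<in> {0<..<1}" "x \<noteq> y" for x y
  proof -
    have pos: "F x > 0" "F y > 0" "F ((x + y) / 2) > 0"
      using that F_ge1[of x] F_ge1[of y] F_ge1[of "(x+y)/2"] by auto
    have "1 / F x + 1 / F y < 2 * (1 / F ((x + y) / 2))"
    proof (cases "x < y")
      case True then show ?thesis using that mid_strict by auto
    next
      case False
      then have "y < x" using that by simp
      then have "1 / F y + 1 / F x < 2 * (1 / F ((y + x) / 2))" using that mid_strict by auto
      then show ?thesis by (simp add: add.commute)
    qed
    then show ?thesis using pos harm_alg by blast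
  qed
  have eq: "F ((x + x) / 2) = 2 * F x * F x / (F x + F x)" if "x \<in> {0<..<1}" for x
  proof -
    have "F x > 0" using that F_ge1[of x] by auto
    then show ?thesis by (simp add: field_simps)
  qed
  show ?thesis unfolding H
  proof (intro conjI ballI concG)
    fix x y :: real assume xy: "x \<in> {0<..<1}" "y \<in> {0<..<1}"
    show "F ((x + y) / 2) \<le> 2 * F x * F y / (F x + F y)"
      using strict[OF xy] eq[OF xy(1)] by (cases "x = y") auto
    show "F ((x + y) / 2) = 2 * F x * F y / (F x + F y) \<longleftrightarrow> x = y"
      using strict[OF xy] eq[OF xy(1)] by (cases "x = y") auto
  qed
qed

end
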